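(* Let $\mathcal D$ be a fixed strict fundamental domain for the action of $R_\omega$ by translations on $K_\omega$. There exists a bijection from $R^{2,\sharp}_{\omega,\rm prim}$ to $\Gamma^\sharp\cap(P^-U^+_{\mathcal D})$ of the form $v\mapsto\gamma_v=\begin{pmatrix}v&w_v\end{pmatrix}$ (the matrix with first column $v$ and second column some $w_v\in R_\omega^2$) such that for every $n\in\mathbb Z$, for all measurable subsets $\Theta$ of $\mathbb S^1_\omega$ and $\mathcal D'$ of $\mathcal D$, and for every nonzero ideal $I$ of $R_\omega$, the following are equivalent: (1) $\|v\|_\omega=q_\omega^n$, $y_v\in I$, $\overline v\in\Theta$ and $x_{w_v}/x_v\in\mathcal D'$; (2) $\gamma_v\in\Gamma_0[I]$ and $\gamma_v\in P^-_\Theta A_nU^+_{\mathcal D'}$.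
   Context: $K$ is a global function field over a finite field $\mathbb{F}_q$ (function field of a geometrically connected smooth projective curve $\mathbf C$ over $\mathbb F_q$), $\omega$ a normalized discrete valuation of $K$, $K_\omega$ the completion, $\mathcal O_\omega$ its valuation ring, $\pi_\omega$ a fixed uniformizer, $q_\omega$ the order of the residue field, $|x|_\omega=q_\omega^{-\omega(x)}$, and $R_\omega$ the ring of elements of $K$ whose only poles are at $\omega$. Elements of $K_\omega^2$ are written $v=(x_v,y_v)$ and identified with column vectors; $\|v\|_\omega=\max\{|x_v|_\omega,|y_v|_\omega\}$, $\overline v=\pi_\omega^{\log_{q_\omega}\|v\|_\omega}v$, $\mathbb S^1_\omega=\{v:\|v\|_\omega=1\}$. $R^2_{\omega,\rm prim}=\{(a,b)\in R_\omega^2:aR_\omega+bR_\omega=R_\omega\}$ and $R^{2,\sharp}_{\omega,\rm prim}=\{(a,b)\in R^2_{\omega,\rm prim}:|a|_\omega\ge|b|_\omega\}$. $G=\mathrm{SL}_2(K_\omega)$, $\Gamma=\mathrm{SL}_2(R_\omega)$, $\Gamma^\sharp=\{\begin{pmatrix}\alpha&\gamma\\ \beta&\delta\end{pmatrix}\in\Gamma:|\alpha|_\omega\ge|\beta|_\omega\}$, $\Gamma_0[I]=\{\begin{pmatrix}a&c\\ b&d\end{pmatrix}\in\Gamma:b\in I\}$. $P^-$ is the lower triangular subgroup of $G$, $P^-(\mathcal O_\omega)=P^-\cap\mathcal M_2(\mathcal O_\omega)$, $U^+$ the upper unipotent subgroup. For $\Theta\subset\mathbb S^1_\omega$, $P^-_\Theta$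 is the set of elements of $P^-(\mathcal O_\omega)$ whose first column lies in $\Theta$; $A_n=\{\mathrm{diag}(\pi_\omega^{-n},\pi_\omega^n)\}$; for $\mathcal D'\subset K_\omega$, $U^+_{\mathcal D'}=\{\begin{pmatrix}1&\gamma\\0&1\end{pmatrix}:\gamma\in\mathcal D'\}$. *)

theory Defs
  imports "HOL-Analysis.Analysis" "HOL-Computational_Algebra.Polynomial"
begin

definition subfield :: "'a::field set \<Rightarrow> bool" where
  "subfield S \<longleftrightarrow> 0 \<in> S \<and> 1 \<in> S \<and> (\<forall>x\<in>S. \<forall>y\<in>S. x + y \<in> S \<and> x * y \<in> S)
     \<and> (\<forall>x\<in>S. - x \<in> S \<and> inverse x \<in> S)"

text \<open>A normalized discrete valuation on a subfield S (value group exactly the integers);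
  the value at 0 (formally +infinity) is irrelevant and never used.\<close>
definition norm_dvaluation :: "'a::field set \<Rightarrow> ('a \<Rightarrow> int) \<Rightarrow> bool" where
  "norm_dvaluation S v \<longleftrightarrow>
     (\<forall>x\<in>S - {0}. \<forall>y\<in>S - {0}. v (x * y) = v x + v y \<and>
                               (x + y \<noteq> 0 \<longrightarrow> min (v x) (v y) \<le> v (x + y)))
     \<and> v ` (S - {0}) = UNIV"

definition poly_over :: "'a::comm_ring_1 set \<Rightarrow> 'a poly \<Rightarrow> bool" where
  "poly_over F p \<longleftrightarrow> (\<forall>i. coeff p i \<in> F)"

definition algebraic_over :: "'a::field set \<Rightarrow> 'a \<Rightarrow> bool" where
  "algebraic_over F x \<longleftrightarrow> (\<exists>p. p \<noteq> 0 \<and> poly_over F p \<and> poly p x = 0)"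

definition rat_fun_field :: "'a::field set \<Rightarrow> 'a \<Rightarrow> 'a set" where
  "rat_fun_field F t = {poly p t / poly r t | p r. poly_over F p \<and> poly_over F r \<and> poly r t \<noteq> 0}"

definition finite_ext :: "'a::field set \<Rightarrow> 'a set \<Rightarrow> bool" where
  "finite_ext L K \<longleftrightarrow> (\<exists>B. finite B \<and> B \<subseteq> K \<and>
      (\<forall>x\<in>K. \<exists>c. (\<forall>b\<in>B. c b \<in> L) \<and> x = (\<Sum>b\<in>B. c b * b)))"

text \<open>K is a global function field with (full) field of constants the finite field F:
  K is finitely generated of transcendence degree 1 over F and F is algebraically closed
  in K (equivalently, K is the function field of a geometrically connected smooth projective
  curve over F).\<close>
definition global_function_field :: "'a::field set \<Rightarrow> 'a set \<Rightarrow> bool" where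
  "global_function_field F K \<longleftrightarrow> subfield F \<and> finite F \<and> subfield K \<and> F \<subseteq> K \<and>
     (\<exists>t\<in>K. \<not> algebraic_over F t \<and> finite_ext (rat_fun_field F t) K) \<and>
     (\<forall>x\<in>K. algebraic_over F x \<longrightarrow> x \<in> F)"

definition place :: "'a::field set \<Rightarrow> 'a set \<Rightarrow> ('a \<Rightarrow> int) \<Rightarrow> bool" where
  "place F K v \<longleftrightarrow> norm_dvaluation K v \<and> (\<forall>x\<in>F - {0}. v x = 0)"

text \<open>R_omega: elements of K whose only poles are at omega.\<close>
definition R_omega :: "'a::field set \<Rightarrow> 'a set \<Rightarrow> ('a \<Rightarrow> int) \<Rightarrow> 'a set" where
  "R_omega F K w = {x\<in>K. \<forall>v. place F K v \<and> (\<exists>y\<in>K - {0}. v y \<noteq> w y) \<longrightarrow> x = 0 \<or> 0 \<le> v x}"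

definition val_converges :: "('a::field \<Rightarrow> int) \<Rightarrow> (nat \<Rightarrow> 'a) \<Rightarrow> 'a \<Rightarrow> bool" where
  "val_converges v x l \<longleftrightarrow> (\<forall>N. \<exists>M. \<forall>n\<ge>M. x n = l \<or> N \<le> v (x n - l))"

definition val_cauchy :: "('a::field \<Rightarrow> int) \<Rightarrow> (nat \<Rightarrow> 'a) \<Rightarrow> bool" where
  "val_cauchy v x \<longleftrightarrow> (\<forall>N. \<exists>M. \<forall>m\<ge>M. \<forall>n\<ge>M. x m = x n \<or> N \<le> v (x m - x n))"

text \<open>The whole ambient type is the completion of K with respect to v: v is a normalized
  discrete valuation on it (restricting to one on K), it is complete, and K is dense.\<close>
definition is_completion :: "'a::field set \<Rightarrow> ('a \<Rightarrow> int) \<Rightarrow> bool" where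
  "is_completion K v \<longleftrightarrow> norm_dvaluation UNIV v \<and> norm_dvaluation K v \<and>
     (\<forall>x. val_cauchy v x \<longrightarrow> (\<exists>l. val_converges v x l)) \<and>
     (\<forall>y. \<exists>x. (\<forall>n. x n \<in> K) \<and> val_converges v x y)"

definition valring :: "('a::field \<Rightarrow> int) \<Rightarrow> 'a set" where
  "valring v = {x. x = 0 \<or> 0 \<le> v x}"

definition maxideal :: "('a::field \<Rightarrow> int) \<Rightarrow> 'a set" where
  "maxideal v = {x. x = 0 \<or> 1 \<le> v x}"

definition residue_field :: "('a::field \<Rightarrow> int) \<Rightarrow> 'a set set" where
  "residue_field v = valring v // {(x, y). x \<in> valring v \<and> y \<in> valring v \<and> x - y \<in> maxideal v}"

definition qw :: "('a::field \<Rightarrow> int) \<Rightarrow> nat" where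
  "qw v = card (residue_field v)"

definition absw :: "('a::field \<Rightarrow> int) \<Rightarrow> 'a \<Rightarrow> real" where
  "absw v x = (if x = 0 then 0 else real (qw v) powi (- v x))"

definition normw :: "('a::field \<Rightarrow> int) \<Rightarrow> 'a^2 \<Rightarrow> real" where
  "normw v u = max (absw v (u$1)) (absw v (u$2))"

definition sphere1 :: "('a::field \<Rightarrow> int) \<Rightarrow> ('a^2) set" where
  "sphere1 v = {u. normw v u = 1}"

text \<open>overline u = unif^(log_q ||u||) u  (the exponent is an integer for u nonzero).\<close>
definition vbar :: "('a::field \<Rightarrow> int) \<Rightarrow> 'a \<Rightarrow> 'a^2 \<Rightarrow> 'a^2" where
  "vbar v unif u = (unif powi \<lfloor>log (real (qw v)) (normw v u)\<rfloor>) *s u"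

definition mat2 :: "'a::zero \<Rightarrow> 'a \<Rightarrow> 'a \<Rightarrow> 'a \<Rightarrow> 'a^2^2" where
  "mat2 a b c d = (\<chi> i j. if i = 1 then (if j = 1 then a else b) else (if j = 1 then c else d))"

definition setmult :: "('a::semiring_1^2^2) set \<Rightarrow> ('a^2^2) set \<Rightarrow> ('a^2^2) set" where
  "setmult A B = {a ** b | a b. a \<in> A \<and> b \<in> B}"

definition Rprim :: "'a::field set \<Rightarrow> ('a^2) set" where
  "Rprim R = {u. u$1 \<in> R \<and> u$2 \<in> R \<and> {u$1 * x + u$2 * y | x y. x \<in> R \<and> y \<in> R} = R}"

definition Rprim_sharp :: "('a::field \<Rightarrow> int) \<Rightarrow> 'a set \<Rightarrow> ('a^2) set" where
  "Rprim_sharp v R = {u \<in> Rprim R. absw v (u$2) \<le> absw v (u$1)}"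

definition SL2_over :: "'a::field set \<Rightarrow> ('a^2^2) set" where
  "SL2_over R = {M. (\<forall>i j. M$i$j \<in> R) \<and> det M = 1}"

definition Gamma_sharp :: "('a::field \<Rightarrow> int) \<Rightarrow> 'a set \<Rightarrow> ('a^2^2) set" where
  "Gamma_sharp v R = {M \<in> SL2_over R. absw v (M$2$1) \<le> absw v (M$1$1)}"

definition Gamma0 :: "'a::field set \<Rightarrow> 'a set \<Rightarrow> ('a^2^2) set" where
  "Gamma0 R I = {M \<in> SL2_over R. M$2$1 \<in> I}"

definition Pminus :: "('a::field^2^2) set" where
  "Pminus = {M. det M = 1 \<and> M$1$2 = 0}"

definition Pminus_Theta :: "('a::field \<Rightarrow> int) \<Rightarrow> ('a^2) set \<Rightarrow> ('a^2^2) set" where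
  "Pminus_Theta v \<Theta> = {M \<in> Pminus. (\<forall>i j. M$i$j \<in> valring v) \<and> column 1 M \<in> \<Theta>}"

definition A_mat :: "'a::field \<Rightarrow> int \<Rightarrow> 'a^2^2" where
  "A_mat unif n = mat2 (unif powi (- n)) 0 0 (unif powi n)"

definition Uplus :: "'a::field set \<Rightarrow> ('a^2^2) set" where
  "Uplus D' = {mat2 1 g 0 1 | g. g \<in> D'}"

definition nonzero_ideal :: "'a::field set \<Rightarrow> 'a set \<Rightarrow> bool" where
  "nonzero_ideal R I \<longleftrightarrow> I \<subseteq> R \<and> 0 \<in> I \<and> (\<forall>x\<in>I. \<forall>y\<in>I. x + y \<in> I)
     \<and> (\<forall>r\<in>R. \<forall>x\<in>I. r * x \<in> I) \<and> I \<noteq> {0}"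

definition strict_fund_dom :: "'a::field set \<Rightarrow> 'a set \<Rightarrow> bool" where
  "strict_fund_dom R D \<longleftrightarrow> (\<forall>x. \<exists>!r. r \<in> R \<and> x + r \<in> D)"

end

theory Submission imports Defs begin


lemma logpowi: "(q::real) > 1 \<Longrightarrow> log q (q powi k) = of_int k"
  by (simp add: powr_real_of_int'[symmetric])

lemma powi_le_iff: "(q::real) > 1 \<Longrightarrow> q powi a \<le> q powi b \<longleftrightarrow> a \<le> b"
proof
  assume q: "q > 1" and "q powi a \<le> q powi b"
  hence "log q (q powi a) \<le> log q (q powi b)"
    by (subst log_le_cancel_iff) auto
  thus "a \<le> b" using q by (simp add: logpowi)
next
  assume "q > 1" "a \<le> b" thus "q powi a \<le> q powi b" by (simp add: power_int_increasing)
qed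

lemma powi_eq_iff: "(q::real) > 1 \<Longrightarrow> q powi a = q powi b \<longleftrightarrow> a = b"
  by (metis order_antisym order_refl powi_le_iff)

lemma nv_mult: "norm_dvaluation S v \<Longrightarrow> x \<in> S \<Longrightarrow> y \<in> S \<Longrightarrow> x \<noteq> 0 \<Longrightarrow> y \<noteq> 0 \<Longrightarrow> v (x*y) = v x + v y"
  unfolding norm_dvaluation_def by blast
lemma nv_add: "norm_dvaluation S v \<Longrightarrow> x \<in> S \<Longrightarrow> y \<in> S \<Longrightarrow> x \<noteq> 0 \<Longrightarrow> y \<noteq> 0 \<Longrightarrow> x + y \<noteq> 0 \<Longrightarrow> min (v x) (v y) \<le> v (x+y)"
  unfolding norm_dvaluation_def by blast
lemma nv_one: "norm_dvaluation S v \<Longrightarrow> 1 \<in> S \<Longrightarrow> v 1 = 0"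
  using nv_mult[of S v 1 1] by simp
lemma nv_m1: "norm_dvaluation S v \<Longrightarrow> 1 \<in> S \<Longrightarrow> -1 \<in> S \<Longrightarrow> v (-1) = 0"
  using nv_mult[of S v "-1" "-1"] nv_one[of S v] by simp

lemma nvU_inverse: "norm_dvaluation UNIV v \<Longrightarrow> x \<noteq> 0 \<Longrightarrow> v (inverse x) = - v x"
  using nv_mult[of UNIV v x "inverse x"] nv_one[of UNIV v] by simp

lemma nvU_power: "norm_dvaluation UNIV v \<Longrightarrow> x \<noteq> 0 \<Longrightarrow> v (x ^ k) = int k * v x"
  by (induction k) (auto simp: nv_one nv_mult algebra_simps)

lemma nvU_powi: "norm_dvaluation UNIV v \<Longrightarrow> x \<noteq> 0 \<Longrightarrow> v (x powi k) = k * v x"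
proof (cases "k \<ge> 0")
  case True
  assume a: "norm_dvaluation UNIV v" "x \<noteq> 0"
  thus ?thesis using True by (simp add: power_int_nonneg_exp nvU_power)
next
  case False
  assume a: "norm_dvaluation UNIV v" "x \<noteq> 0"
  have "x powi k = inverse (x powi (-k))" by (simp add: power_int_minus[symmetric])
  also have "x powi (-k) = x ^ nat (-k)" using False by (simp add: power_int_nonneg_exp)
  finally show ?thesis using a False by (simp add: nvU_inverse nvU_power)
qed

lemma qw_ge2:
  assumes "norm_dvaluation UNIV w" "finite (residue_field w)"
  shows "qw w \<ge> 2"
proof -
  let ?r = "{(x, y). x \<in> valring w \<and> y \<in> valring w \<and> x - y \<in> maxideal w}"
  have w1: "w 1 = 0" using nv_one[OF assms(1)] by simp
  have A: "?r `` {0} \<in> residue_field w" "?r `` {1} \<in> residue_field w"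
    unfolding residue_field_def by (rule quotientI, simp add: valring_def w1)+
  have "0 \<in> ?r `` {0}" by (auto simp: valring_def maxideal_def)
  moreover have "0 \<notin> ?r `` {1}" by (auto simp: maxideal_def w1)
  ultimately have "?r `` {0} \<noteq> ?r `` {1}" by blast
  hence "card {?r `` {0}, ?r `` {1}} = 2" by simp
  moreover have "card {?r `` {0}, ?r `` {1}} \<le> card (residue_field w)"
    using A assms(2) by (intro card_mono) auto
  ultimately show ?thesis unfolding qw_def by simp
qed



lemma sf: assumes "subfield K"
  shows "0 \<in> K" "1 \<in> K" "x \<in> K \<Longrightarrow> y \<in> K \<Longrightarrow> x + y \<in> K" "x \<in> K \<Longrightarrow> y \<in> K \<Longrightarrow> x * y \<in> K"
    "x \<in> K \<Longrightarrow> -x \<in> K"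
  using assms unfolding subfield_def by auto

lemma place_nv: "place F K v \<Longrightarrow> norm_dvaluation K v" by (simp add: place_def)

lemma R_K: "x \<in> R_omega F K w \<Longrightarrow> x \<in> K" by (simp add: R_omega_def)

lemma R_zero: "subfield K \<Longrightarrow> 0 \<in> R_omega F K w"
  by (simp add: R_omega_def sf)

lemma R_one: "subfield K \<Longrightarrow> 1 \<in> R_omega F K w"
  unfolding R_omega_def using nv_one[OF place_nv, of F K] sf(2)[of K] by fastforce

lemma R_add: assumes K: "subfield K" and x: "x \<in> R_omega F K w" and y: "y \<in> R_omega F K w"
  shows "x + y \<in> R_omega F K w"
  unfolding R_omega_def
proof (intro CollectI conjI allI impI)
  show "x + y \<in> K" using x y K by (simp add: R_K sf)
  fix v assume h: "place F K v \<and> (\<exists>y\<in>K - {0}. v y \<noteq> w y)"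
  have hx: "x = 0 \<or> 0 \<le> v x" using x h unfolding R_omega_def by blast
  have hy: "y = 0 \<or> 0 \<le> v y" using y h unfolding R_omega_def by blast
  show "x + y = 0 \<or> 0 \<le> v (x + y)"
  proof (cases "x = 0 \<or> y = 0 \<or> x + y = 0")
    case True thus ?thesis using hx hy by auto
  next
    case False
    hence "min (v x) (v y) \<le> v (x+y)"
      using nv_add[OF place_nv[of F K v]] h x y by (auto simp: R_K)
    thus ?thesis using hx hy False by auto
  qed
qed

lemma R_mult: assumes K: "subfield K" and x: "x \<in> R_omega F K w" and y: "y \<in> R_omega F K w"
  shows "x * y \<in> R_omega F K w"
  unfolding R_omega_def
proof (intro CollectI conjI allI impI)
  show "x * y \<in> K" using x y K by (simp add: R_K sf)
  fix v assume h: "place F K v \<and> (\<exists>y\<in>K - {0}. v y \<noteq> w y)"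
  have hx: "x = 0 \<or> 0 \<le> v x" using x h unfolding R_omega_def by blast
  have hy: "y = 0 \<or> 0 \<le> v y" using y h unfolding R_omega_def by blast
  show "x * y = 0 \<or> 0 \<le> v (x * y)"
  proof (cases "x = 0 \<or> y = 0")
    case True thus ?thesis by auto
  next
    case False
    hence "v (x * y) = v x + v y"
      using nv_mult[OF place_nv[of F K v]] h x y by (auto simp: R_K)
    thus ?thesis using hx hy False by auto
  qed
qed

lemma R_m1: assumes K: "subfield K" shows "-1 \<in> R_omega F K w"
  unfolding R_omega_def
proof (intro CollectI conjI allI impI)
  show "-1 \<in> K" using K by (simp add: sf)
  fix v assume h: "place F K v \<and> (\<exists>y\<in>K - {0}. v y \<noteq> w y)"
  show "-1 = 0 \<or> 0 \<le> v (-1)" using nv_m1[OF place_nv[of F K v]] h K by (simp add: sf)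
qed

lemma R_uminus: "subfield K \<Longrightarrow> x \<in> R_omega F K w \<Longrightarrow> -x \<in> R_omega F K w"
  using R_mult[OF _ R_m1] by fastforce

lemma R_diff: "subfield K \<Longrightarrow> x \<in> R_omega F K w \<Longrightarrow> y \<in> R_omega F K w \<Longrightarrow> x - y \<in> R_omega F K w"
  using R_add[of K x F w "-y"] R_uminus by fastforce

lemma mat2_nth [simp]:
  "mat2 a b c d $ 1 $ 1 = a" "mat2 a b c d $ 1 $ 2 = b" "mat2 a b c d $ 2 $ 1 = c" "mat2 a b c d $ 2 $ 2 = d"
  by (simp_all add: mat2_def)

lemma mat2_eta: "(M::'a::zero^2^2) = mat2 (M$1$1) (M$1$2) (M$2$1) (M$2$2)"
  by (simp add: vec_eq_iff forall_2)

lemma mat2_eq_iff: "mat2 a b c d = mat2 a' b' c' d' \<longleftrightarrow> a = a' \<and> b = b' \<and> c = c' \<and> d = d'"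
  by (metis mat2_nth)

lemma mat2_mult: "mat2 a b c d ** mat2 e f g h = (mat2 (a*e+b*g) (a*f+b*h) (c*e+d*g) (c*f+d*h) :: 'a::semiring_1^2^2)"
  by (simp add: vec_eq_iff forall_2 matrix_matrix_mult_def sum_2)

lemma det_mat2: "det (mat2 a b c d :: 'a::comm_ring_1^2^2) = a*d - b*c"
  by (simp add: det_2)

lemma column_nth [simp]: "column j M $ i = M $ i $ j"
  by (simp add: column_def)



lemma PU_iff: "(M::'a::field^2^2) \<in> setmult Pminus (Uplus E) \<longleftrightarrow> det M = 1 \<and> M$1$1 \<noteq> 0 \<and> M$1$2/M$1$1 \<in> E"
proof
  assume "M \<in> setmult Pminus (Uplus E)"
  then obtain p g where p: "p \<in> Pminus" and g: "g \<in> E" and M: "M = p ** mat2 1 g 0 1"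
    unfolding setmult_def Uplus_def by blast
  have pe: "p = mat2 (p$1$1) 0 (p$2$1) (p$2$2)" using p mat2_eta[of p] by (simp add: Pminus_def)
  have d: "p$1$1 * p$2$2 = 1" using p pe det_mat2[of "p$1$1" 0 "p$2$1" "p$2$2"] by (simp add: Pminus_def)
  have M2: "M = mat2 (p$1$1) (p$1$1 * g) (p$2$1) (p$2$1 * g + p$2$2)"
    using M pe mat2_mult[of "p$1$1" 0 "p$2$1" "p$2$2" 1 g 0 1] by simp
  have "p$1$1 \<noteq> 0" using d by auto
  then show "det M = 1 \<and> M$1$1 \<noteq> 0 \<and> M$1$2/M$1$1 \<in> E"
    using M2 g d by (simp add: det_mat2 algebra_simps)
next
  assume h: "det M = 1 \<and> M$1$1 \<noteq> 0 \<and> M$1$2/M$1$1 \<in> E"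
  let ?p = "mat2 (M$1$1) 0 (M$2$1) (inverse (M$1$1))"
  have "?p \<in> Pminus" using h by (simp add: Pminus_def det_mat2)
  moreover have "mat2 1 (M$1$2/M$1$1) 0 1 \<in> Uplus E" using h by (auto simp: Uplus_def)
  moreover have "M = ?p ** mat2 1 (M$1$2/M$1$1) 0 1"
  proof -
    have "M$1$1 * M$2$2 - M$1$2 * M$2$1 = 1" using h by (simp add: det_2)
    hence "M$2$2 = M$2$1 * (M$1$2 / M$1$1) + inverse (M$1$1)"
      using h by (simp add: field_simps)
    thus ?thesis using h by (subst mat2_eta) (simp add: mat2_mult mat2_eq_iff)
  qed
  ultimately show "M \<in> setmult Pminus (Uplus E)" unfolding setmult_def by blast
qed



definition ringR :: "'a::field set \<Rightarrow> bool" where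
  "ringR R \<longleftrightarrow> 0 \<in> R \<and> 1 \<in> R \<and> (\<forall>x\<in>R. \<forall>y\<in>R. x + y \<in> R \<and> x * y \<in> R \<and> - x \<in> R)"

lemma ringR_R: "subfield K \<Longrightarrow> ringR (R_omega F K w)"
  by (simp add: ringR_def R_zero R_one R_add R_mult R_uminus)

lemma ringR: assumes "ringR R"
  shows "0 \<in> R" "1 \<in> R" "x \<in> R \<Longrightarrow> y \<in> R \<Longrightarrow> x + y \<in> R" "x \<in> R \<Longrightarrow> y \<in> R \<Longrightarrow> x * y \<in> R"
    "x \<in> R \<Longrightarrow> -x \<in> R" "x \<in> R \<Longrightarrow> y \<in> R \<Longrightarrow> x - y \<in> R"
  using assms unfolding ringR_def apply blast+
  using assms unfolding ringR_def by (metis diff_conv_add_uminus)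

lemma absw_pos: "qw w \<ge> 2 \<Longrightarrow> x \<noteq> 0 \<Longrightarrow> absw w x > 0"
  by (simp add: absw_def)

lemma absw_zero [simp]: "absw w 0 = 0" by (simp add: absw_def)

lemma sharp_a_nz: assumes R: "ringR R" and q: "qw w \<ge> 2" and u: "u \<in> Rprim_sharp w R"
  shows "u$1 \<noteq> 0"
proof
  assume a: "u$1 = 0"
  hence "absw w (u$2) \<le> 0" using u by (simp add: Rprim_sharp_def)
  hence b: "u$2 = 0" using absw_pos[OF q, of "u$2"] by force
  have "{u$1 * x + u$2 * y | x y. x \<in> R \<and> y \<in> R} = R" using u by (simp add: Rprim_sharp_def Rprim_def)
  hence "R \<subseteq> {0}" using a b by auto
  thus False using ringR(2)[OF R] by auto
qed

lemma bezout: assumes R: "ringR R" and u: "u \<in> Rprim R"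
  shows "\<exists>x\<in>R. \<exists>y\<in>R. u$1 * x + u$2 * y = 1"
proof -
  have "1 \<in> {u$1 * x + u$2 * y | x y. x \<in> R \<and> y \<in> R}"
    using u ringR(2)[OF R] by (simp add: Rprim_def)
  then obtain x y where "x \<in> R" "y \<in> R" "1 = u$1 * x + u$2 * y" by blast
  thus ?thesis by metis
qed

lemma G_iff: "M \<in> Gamma_sharp w R \<inter> setmult Pminus (Uplus D) \<longleftrightarrow>
   (\<forall>i j. M$i$j \<in> R) \<and> det M = 1 \<and> absw w (M$2$1) \<le> absw w (M$1$1) \<and> M$1$1 \<noteq> 0 \<and> M$1$2/M$1$1 \<in> D"
  by (auto simp: Gamma_sharp_def SL2_over_def PU_iff)

lemma all2: "(\<forall>i j. P i j) \<longleftrightarrow> P 1 1 \<and> P 1 2 \<and> P 2 1 \<and> P (2::2) (2::2)"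
  by (auto simp: forall_2)

lemma ex_unique:
  assumes R: "ringR R" and q: "qw w \<ge> 2" and fd: "strict_fund_dom R D" and u: "u \<in> Rprim_sharp w R"
  shows "\<exists>!M. M \<in> Gamma_sharp w R \<inter> setmult Pminus (Uplus D) \<and> column 1 M = u"
proof -
  have a0: "u$1 \<noteq> 0" by (rule sharp_a_nz[OF R q u])
  have uR: "u$1 \<in> R" "u$2 \<in> R" using u by (auto simp: Rprim_sharp_def Rprim_def)
  have sh: "absw w (u$2) \<le> absw w (u$1)" using u by (simp add: Rprim_sharp_def)
  obtain x y where xy: "x \<in> R" "y \<in> R" "u$1 * x + u$2 * y = 1"
    using bezout[OF R, of u] u unfolding Rprim_sharp_def by blast
  obtain r where r: "r \<in> R" "-y/u$1 + r \<in> D" using fd unfolding strict_fund_dom_def by blast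
  let ?M = "mat2 (u$1) (-y + r * u$1) (u$2) (x + r * u$2)"
  have ex: "?M \<in> Gamma_sharp w R \<inter> setmult Pminus (Uplus D) \<and> column 1 ?M = u"
  proof -
    have "(-y + r * u$1) / u$1 = -y/u$1 + r" using a0 by (simp add: field_simps)
    moreover have "det ?M = 1" using xy(3) by (simp add: det_mat2 algebra_simps)
    moreover have "\<forall>i j. ?M$i$j \<in> R" using xy r uR R by (simp add: all2 ringR)
    ultimately have "?M \<in> Gamma_sharp w R \<inter> setmult Pminus (Uplus D)"
      using a0 r sh by (intro G_iff[THEN iffD2]) simp
    moreover have "column 1 ?M = u" by (simp add: vec_eq_iff forall_2)
    ultimately show ?thesis by blast
  qed
  moreover have uq: "M = M'" if M: "M \<in> Gamma_sharp w R \<inter> setmult Pminus (Uplus D)" "column 1 M = u"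
    and M': "M' \<in> Gamma_sharp w R \<inter> setmult Pminus (Uplus D)" "column 1 M' = u" for M M'
  proof -
    have c1: "M$1$1 = u$1" "M$2$1 = u$2" "M'$1$1 = u$1" "M'$2$1 = u$2"
      using M(2) M'(2) by (auto simp: vec_eq_iff forall_2)
    define a where "a = u$1" define b where "b = u$2"
    define c where "c = M$1$2" define d where "d = M$2$2"
    define c' where "c' = M'$1$2" define d' where "d' = M'$2$2"
    have e1: "a*d = 1 + c*b" using M(1)[unfolded G_iff] c1 by (simp add: det_2 a_def b_def c_def d_def algebra_simps)
    have e2: "a*d' = 1 + c'*b" using M'(1)[unfolded G_iff] c1 by (simp add: det_2 a_def b_def c'_def d'_def algebra_simps)
    define t where "t = c' * d - c * d'"
    have tR: "t \<in> R" using M(1)[unfolded G_iff] M'(1)[unfolded G_iff] R by (simp add: t_def c_def d_def c'_def d'_def ringR)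
    have "t * a = c' * (a*d) - c * (a*d')" by (simp add: t_def algebra_simps)
    also have "\<dots> = c' - c" using e1 e2 by (simp add: algebra_simps)
    finally have ta: "t * a = c' - c" .
    have "c'/a = c/a + t" using ta a0 by (simp add: a_def field_simps)
    moreover have "c/a \<in> D" "c'/a \<in> D" using M(1)[unfolded G_iff] M'(1)[unfolded G_iff] c1 by (auto simp: c_def c'_def a_def)
    ultimately have "c/a + 0 \<in> D" "c/a + t \<in> D" by auto
    moreover obtain r0 where r0: "\<And>y. y \<in> R \<Longrightarrow> c/a + y \<in> D \<Longrightarrow> y = r0"
      using fd unfolding strict_fund_dom_def by metis
    ultimately have "t = 0" using tR ringR(1)[OF R] by metis
    hence cc: "c' = c" using ta by simp
    hence "a * d' = a * d" using e1 e2 by simp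
    hence "d' = d" using a0 by (simp add: a_def)
    thus "M = M'" using cc c1 by (subst mat2_eta, subst (2) mat2_eta) (simp add: c_def c'_def d_def d'_def)
  qed
  show ?thesis
  proof (rule ex1I[of _ ?M])
    show "?M \<in> Gamma_sharp w R \<inter> setmult Pminus (Uplus D) \<and> column 1 ?M = u" by (rule ex)
    fix M assume h: "M \<in> Gamma_sharp w R \<inter> setmult Pminus (Uplus D) \<and> column 1 M = u"
    show "M = ?M" by (rule uq[OF conjunct1[OF h] conjunct2[OF h] conjunct1[OF ex] conjunct2[OF ex]])
  qed
qed

lemma G_col: assumes R: "ringR R" and M: "M \<in> Gamma_sharp w R \<inter> setmult Pminus (Uplus D)"
  shows "column 1 M \<in> Rprim_sharp w R"
proof -
  have h: "\<forall>i j. M$i$j \<in> R" "M$1$1 * M$2$2 - M$1$2 * M$2$1 = 1" "absw w (M$2$1) \<le> absw w (M$1$1)"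
    using M[unfolded G_iff] det_2[of M] by auto
  have "{M$1$1 * x + M$2$1 * y | x y. x \<in> R \<and> y \<in> R} = R"
  proof (intro equalityI subsetI)
    fix z assume "z \<in> {M$1$1 * x + M$2$1 * y | x y. x \<in> R \<and> y \<in> R}"
    thus "z \<in> R" using h R by (auto simp: ringR)
  next
    fix z assume z: "z \<in> R"
    have "z = M$1$1 * (z * M$2$2) + M$2$1 * (- (z * M$1$2))"
    proof -
      have "M$1$1 * (z * M$2$2) + M$2$1 * (- (z * M$1$2)) = z * (M$1$1 * M$2$2 - M$1$2 * M$2$1)"
        by (simp add: algebra_simps)
      thus ?thesis using h(2) by simp
    qed
    moreover have "z * M$2$2 \<in> R" "- (z * M$1$2) \<in> R" using h z R by (auto simp: ringR)
    ultimately show "z \<in> {M$1$1 * x + M$2$1 * y | x y. x \<in> R \<and> y \<in> R}" by blast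
  qed
  thus ?thesis using h by (simp add: Rprim_sharp_def Rprim_def)
qed



lemma e_val: assumes nv: "norm_dvaluation UNIV w" and wu: "w unif = 1" and e: "unif powi n \<noteq> 0"
  shows "w (unif powi n) = n"
proof (cases "n = 0")
  case True thus ?thesis using nv_one[OF nv] by simp
next
  case False
  hence "unif \<noteq> 0" using e by auto
  thus ?thesis using nvU_powi[OF nv] wu by simp
qed

lemma A_mat_eq: "A_mat unif n = mat2 (inverse (unif powi n)) 0 0 (unif powi n)"
  by (simp add: A_mat_def power_int_minus)

lemma valring_iff: "x \<in> valring w \<longleftrightarrow> x = 0 \<or> 0 \<le> w x" by (simp add: valring_def)

lemma PAU_iff:
  assumes nv: "norm_dvaluation UNIV w" and wu: "w unif = 1" and dM: "det M = 1"
  shows "M \<in> setmult (setmult (Pminus_Theta w \<Theta>) {A_mat unif n}) (Uplus E) \<longleftrightarrow>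
    M$1$1 \<noteq> 0 \<and> M$1$2/M$1$1 \<in> E \<and> unif powi n \<noteq> 0 \<and> w (M$1$1) = -n \<and>
    (M$2$1 = 0 \<or> -n \<le> w (M$2$1)) \<and> (unif powi n) *s column 1 M \<in> \<Theta>"
    (is "_ \<longleftrightarrow> ?R")
proof
  define e where "e = unif powi n"
  assume "M \<in> setmult (setmult (Pminus_Theta w \<Theta>) {A_mat unif n}) (Uplus E)"
  then obtain p g where p: "p \<in> Pminus_Theta w \<Theta>" and g: "g \<in> E"
    and M: "M = (p ** A_mat unif n) ** mat2 1 g 0 1"
    unfolding setmult_def Uplus_def by blast
  have pP: "p \<in> Pminus" and pv: "\<forall>i j. p$i$j \<in> valring w" and pT: "column 1 p \<in> \<Theta>"
    using p by (auto simp: Pminus_Theta_def)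
  define p11 where "p11 = p$1$1" define p21 where "p21 = p$2$1" define p22 where "p22 = p$2$2"
  have pe: "p = mat2 p11 0 p21 p22" using pP mat2_eta[of p] by (simp add: Pminus_def p11_def p21_def p22_def)
  have d: "p11 * p22 = 1" using pP pe det_mat2[of p11 0 p21 p22] by (simp add: Pminus_def)
  have M2: "M = mat2 (p11 * inverse e) (p11 * inverse e * g) (p21 * inverse e) (p21 * inverse e * g + p22 * e)"
    using M pe by (simp add: A_mat_eq mat2_mult e_def)
  have "det M = p11 * p22 * (inverse e * e)" using M2 by (simp add: det_mat2 algebra_simps)
  hence ee: "inverse e * e = 1" using dM d by simp
  hence e0: "e \<noteq> 0" by auto
  have p110: "p11 \<noteq> 0" using d by auto
  have M11: "M$1$1 \<noteq> 0" using M2 p110 e0 by simp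
  have g': "M$1$2/M$1$1 = g" using M2 p110 e0 by simp
  have p11e: "p11 = M$1$1 * e" and p21e: "p21 = M$2$1 * e" using M2 e0 by simp_all
  have p22i: "p22 = inverse p11" using d p110 by (simp add: field_simps)
  have "0 \<le> w p11" "0 \<le> w p22" using pv p110 d
    by (auto simp: valring_iff all2 p11_def p22_def)
  moreover have "w p22 = - w p11" using p22i nvU_inverse[OF nv p110] by simp
  ultimately have wp11: "w p11 = 0" by simp
  have we: "w e = n" using e_val[OF nv wu] e0 e_def by simp
  have w11: "w (M$1$1) = -n" using wp11 p11e nv_mult[OF nv, of "M$1$1" e] M11 e0 we by simp
  have w21: "M$2$1 = 0 \<or> -n \<le> w (M$2$1)"
  proof (cases "M$2$1 = 0")
    case False
    hence "p21 \<noteq> 0" using p21e e0 by simp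
    hence "0 \<le> w p21" using pv by (auto simp: valring_iff all2 p21_def)
    thus ?thesis using p21e nv_mult[OF nv, of "M$2$1" e] False e0 we by simp
  qed simp
  have "e *s column 1 M = column 1 p" using p11e p21e pe
    by (simp add: vec_eq_iff forall_2 mult.commute)
  thus ?R using M11 g' g e0 w11 w21 pT e_def by simp
next
  define e where "e = unif powi n"
  assume h: ?R
  hence e0: "e \<noteq> 0" and M11: "M$1$1 \<noteq> 0" using e_def by auto
  have we: "w e = n" using e_val[OF nv wu] e0 e_def by simp
  let ?p = "mat2 (M$1$1 * e) 0 (M$2$1 * e) (inverse (M$1$1 * e))"
  let ?g = "M$1$2/M$1$1"
  have w1e: "w (M$1$1 * e) = 0" using nv_mult[OF nv, of "M$1$1" e] M11 e0 we h by simp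
  have "?p \<in> Pminus_Theta w \<Theta>"
    unfolding Pminus_Theta_def Pminus_def
  proof (intro CollectI conjI)
    show "det ?p = 1" using M11 e0 by (simp add: det_mat2 field_simps)
    show "?p $ 1 $ 2 = 0" by simp
    have "M$2$1 * e \<in> valring w"
    proof (cases "M$2$1 = 0")
      case False
      thus ?thesis using nv_mult[OF nv, of "M$2$1" e] e0 we h by (simp add: valring_iff)
    qed (simp add: valring_iff)
    moreover have "inverse (M$1$1 * e) \<in> valring w"
      using nvU_inverse[OF nv, of "M$1$1 * e"] w1e M11 e0 by (simp add: valring_iff)
    ultimately show "\<forall>i j. ?p $ i $ j \<in> valring w" using w1e by (simp add: all2 valring_iff)
    have "column 1 ?p = e *s column 1 M" by (simp add: vec_eq_iff forall_2 mult.commute)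
    thus "column 1 ?p \<in> \<Theta>" using h e_def by simp
  qed
  moreover have "mat2 1 ?g 0 1 \<in> Uplus E" using h by (auto simp: Uplus_def)
  moreover have "M = (?p ** A_mat unif n) ** mat2 1 ?g 0 1"
  proof -
    have "M$1$1 * M$2$2 - M$1$2 * M$2$1 = 1" using dM by (simp add: det_2)
    hence "M$2$2 = M$2$1 * ?g + inverse (M$1$1)"
      using M11 by (simp add: field_simps)
    thus ?thesis using M11 e0 by (subst mat2_eta) (simp add: A_mat_eq e_def[symmetric] mat2_mult mat2_eq_iff field_simps)
  qed
  ultimately show "M \<in> setmult (setmult (Pminus_Theta w \<Theta>) {A_mat unif n}) (Uplus E)"
    unfolding setmult_def by blast
qed



theorem proposition3p1:
  fixes F K :: "'a::field set" and w :: "'a \<Rightarrow> int" and unif :: 'a and D :: "'a set"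
  assumes "global_function_field F K"
    and "place F K w"
    and "is_completion K w"
    and "finite (residue_field w)"
    and "w unif = 1"
    and "strict_fund_dom (R_omega F K w) D"
  shows "\<exists>f. bij_betw f (Rprim_sharp w (R_omega F K w))
                (Gamma_sharp w (R_omega F K w) \<inter> setmult Pminus (Uplus D))
           \<and> (\<forall>u \<in> Rprim_sharp w (R_omega F K w).
                 column 1 (f u) = u \<and> (\<forall>i. column 2 (f u) $ i \<in> R_omega F K w))
           \<and> (\<forall>n::int. \<forall>\<Theta> D' I. \<Theta> \<subseteq> sphere1 w \<longrightarrow> D' \<subseteq> D \<longrightarrow>
                 nonzero_ideal (R_omega F K w) I \<longrightarrow>
                 (\<forall>u \<in> Rprim_sharp w (R_omega F K w).
                    (normw w u = real (qw w) powi n \<and> u$2 \<in> I \<and> vbar w unif u \<in> \<Theta>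
                       \<and> (column 2 (f u))$1 / u$1 \<in> D')
                    \<longleftrightarrow>
                    (f u \<in> Gamma0 (R_omega F K w) I \<and>
                     f u \<in> setmult (setmult (Pminus_Theta w \<Theta>) {A_mat unif n}) (Uplus D'))))"
proof -
  define R where "R = R_omega F K w"
  define G where "G = Gamma_sharp w R \<inter> setmult Pminus (Uplus D)"
  define q where "q = real (qw w)"
  have sK: "subfield K" using assms(1) by (simp add: global_function_field_def)
  have nv: "norm_dvaluation UNIV w" using assms(3) by (simp add: is_completion_def)
  have q2: "qw w \<ge> 2" by (rule qw_ge2[OF nv assms(4)])
  have q1: "q > 1" using q2 by (simp add: q_def)
  have R: "ringR R" unfolding R_def by (rule ringR_R[OF sK])
  have fd: "strict_fund_dom R D" using assms(6) by (simp add: R_def)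
  define f where "f = (\<lambda>u. THE M. M \<in> G \<and> column 1 M = u)"
  have fP: "f u \<in> G \<and> column 1 (f u) = u" if u: "u \<in> Rprim_sharp w R" for u
    unfolding f_def G_def by (rule theI'[OF ex_unique[OF R q2 fd u]])
  have bij: "bij_betw f (Rprim_sharp w R) G"
    unfolding bij_betw_def
  proof
    show "inj_on f (Rprim_sharp w R)" by (metis fP inj_onI)
    show "f ` Rprim_sharp w R = G"
    proof
      show "f ` Rprim_sharp w R \<subseteq> G" using fP by blast
      show "G \<subseteq> f ` Rprim_sharp w R"
      proof
        fix M assume M: "M \<in> G"
        have cu: "column 1 M \<in> Rprim_sharp w R" using G_col[OF R] M G_def by blast
        have "f (column 1 M) = M" unfolding f_def G_def
          by (rule the1_equality[OF ex_unique[OF R q2 fd cu]]) (use M G_def in simp)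
        thus "M \<in> f ` Rprim_sharp w R" using cu by force
      qed
    qed
  qed
  have col2: "\<forall>i. column 2 (f u) $ i \<in> R" if u: "u \<in> Rprim_sharp w R" for u
    using fP[OF u] by (auto simp: G_def Gamma_sharp_def SL2_over_def)
  have main: "(normw w u = q powi n \<and> u$2 \<in> I \<and> vbar w unif u \<in> \<Theta>
                       \<and> (column 2 (f u))$1 / u$1 \<in> D')
                    \<longleftrightarrow>
                    (f u \<in> Gamma0 R I \<and>
                     f u \<in> setmult (setmult (Pminus_Theta w \<Theta>) {A_mat unif n}) (Uplus D'))"
    if u: "u \<in> Rprim_sharp w R" and T: "\<Theta> \<subseteq> sphere1 w" for u n \<Theta> D' I
  proof -
    define M where "M = f u"
    define e where "e = unif powi n"
    have MG: "M \<in> G" and Mc: "column 1 M = u" using fP[OF u] M_def by auto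
    have MG': "(\<forall>i j. M$i$j \<in> R) \<and> det M = 1 \<and> absw w (M$2$1) \<le> absw w (M$1$1) \<and> M$1$1 \<noteq> 0 \<and> M$1$2/M$1$1 \<in> D"
      using MG unfolding G_def by (rule G_iff[THEN iffD1])
    have M1: "M$1$1 = u$1" "M$2$1 = u$2" using Mc by (auto simp: vec_eq_iff forall_2)
    have a0: "u$1 \<noteq> 0" using MG' M1 by simp
    have sh: "absw w (u$2) \<le> absw w (u$1)" using u by (simp add: Rprim_sharp_def)
    have nu: "normw w u = q powi (- w (u$1))"
      using sh a0 by (simp add: normw_def absw_def q_def)
    have G0: "M \<in> Gamma0 R I \<longleftrightarrow> u$2 \<in> I"
      using MG' M1 by (simp add: Gamma0_def SL2_over_def)
    have PAU: "M \<in> setmult (setmult (Pminus_Theta w \<Theta>) {A_mat unif n}) (Uplus D') \<longleftrightarrow>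
      M$1$1 \<noteq> 0 \<and> M$1$2/M$1$1 \<in> D' \<and> e \<noteq> 0 \<and> w (M$1$1) = -n \<and>
      (M$2$1 = 0 \<or> -n \<le> w (M$2$1)) \<and> e *s column 1 M \<in> \<Theta>"
      unfolding e_def by (rule PAU_iff[OF nv assms(5)]) (use MG' in simp)
    have nn: "normw w u = q powi n \<longleftrightarrow> w (u$1) = -n"
      using nu powi_eq_iff[OF q1] by auto
    have vb: "vbar w unif u = e *s u" if "w (u$1) = -n"
    proof -
      have "log q (normw w u) = n" using nu that logpowi[OF q1] by simp
      thus ?thesis by (simp add: vbar_def e_def q_def)
    qed
    have b: "u$2 = 0 \<or> -n \<le> w (u$2)" if "w (u$1) = -n"
    proof (cases "u$2 = 0")
      case False
      hence "q powi (- w (u$2)) \<le> q powi (- w (u$1))" using sh a0 by (simp add: absw_def q_def)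
      thus ?thesis using powi_le_iff[OF q1] that by simp
    qed simp
    have e0: "e \<noteq> 0" if "e *s u \<in> \<Theta>"
    proof
      assume "e = 0"
      hence "normw w (e *s u) = 0" by (simp add: normw_def)
      thus False using that T by (auto simp: sphere1_def)
    qed
    show ?thesis
      unfolding M_def[symmetric] G0 PAU nn using M1 Mc a0 vb b e0 by auto
  qed
  show ?thesis
    unfolding R_def[symmetric] q_def[symmetric]
    using bij fP col2 main unfolding G_def by blast
qed

end
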